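(* Let $G$ be a graph and $c:V(G)\to\{0,1\}$ a coloring that is strongly maximal in some set $A'\subseteq V(G)$. If $A\supseteq A'$ is a set of vertices such that $A\setminus A'$ contains only finitely many vertices of finite degree, then $c$ is almost strongly maximal in $A$.
   Context: Graphs are simple, undirected, possibly infinite; degree of $v$ is $|N(v)|$. A coloring is a map $c:V(G)\to\{0,1\}$. $\mathit{trans}(c)=\{uv\in E(G):c(u)\neq c(v)\}$; $c*F$ is the coloring differing from $c$ exactly on $F$; for finite $F$ consisting of vertices of finite degree, $\mathit{dtrans}(c,F)=|\mathit{trans}(c)\setminus\mathit{trans}(c*F)|-|\mathit{trans}(c*F)\setminus\mathit{trans}(c)|$. $c$ is strongly maximal in $A$ if $\mathit{dtrans}(c,F)\ge0$ for every finite $F\subseteq A$ consisting of vertices of finite degree. Colorings $c,c'$ are close in $A$ if $c\triangle c'=\{v:c(v)\neq c'(v)\}$ is finite, consists only of vertices of finite degree, and is contained in $A$. $c$ is almost strongly maximal in $A$ if it is close in $A$ to a coloring that is strongly maximal in $A$. *)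

theory Defs
  imports Main
begin

definition graph :: "'a set \<Rightarrow> ('a \<Rightarrow> 'a \<Rightarrow> bool) \<Rightarrow> bool" where
  "graph V E \<longleftrightarrow> (\<forall>u v. E u v \<longrightarrow> u \<in> V \<and> v \<in> V \<and> E v u \<and> u \<noteq> v)"

definition nbrs :: "'a set \<Rightarrow> ('a \<Rightarrow> 'a \<Rightarrow> bool) \<Rightarrow> 'a \<Rightarrow> 'a set" where
  "nbrs V E v = {u \<in> V. E v u}"

definition fin_deg :: "'a set \<Rightarrow> ('a \<Rightarrow> 'a \<Rightarrow> bool) \<Rightarrow> 'a \<Rightarrow> bool" where
  "fin_deg V E v \<longleftrightarrow> finite (nbrs V E v)"

definition edges :: "'a set \<Rightarrow> ('a \<Rightarrow> 'a \<Rightarrow> bool) \<Rightarrow> 'a set set" where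
  "edges V E = {{u, v} | u v. u \<in> V \<and> v \<in> V \<and> E u v}"

text \<open>Colorings V(G) -> {0,1} are modelled as boolean-valued maps; only values on V matter.\<close>
definition trans_edges :: "'a set \<Rightarrow> ('a \<Rightarrow> 'a \<Rightarrow> bool) \<Rightarrow> ('a \<Rightarrow> bool) \<Rightarrow> 'a set set" where
  "trans_edges V E c = {{u, v} | u v. u \<in> V \<and> v \<in> V \<and> E u v \<and> c u \<noteq> c v}"

definition flip :: "('a \<Rightarrow> bool) \<Rightarrow> 'a set \<Rightarrow> ('a \<Rightarrow> bool)" where
  "flip c F = (\<lambda>v. if v \<in> F then \<not> c v else c v)"

definition dtrans :: "'a set \<Rightarrow> ('a \<Rightarrow> 'a \<Rightarrow> bool) \<Rightarrow> ('a \<Rightarrow> bool) \<Rightarrow> 'a set \<Rightarrow> int" where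
  "dtrans V E c F =
     int (card (trans_edges V E c - trans_edges V E (flip c F)))
   - int (card (trans_edges V E (flip c F) - trans_edges V E c))"

definition strongly_maximal :: "'a set \<Rightarrow> ('a \<Rightarrow> 'a \<Rightarrow> bool) \<Rightarrow> ('a \<Rightarrow> bool) \<Rightarrow> 'a set \<Rightarrow> bool" where
  "strongly_maximal V E c A \<longleftrightarrow>
     (\<forall>F. finite F \<and> F \<subseteq> A \<and> (\<forall>v\<in>F. fin_deg V E v) \<longrightarrow> dtrans V E c F \<ge> 0)"

definition close :: "'a set \<Rightarrow> ('a \<Rightarrow> 'a \<Rightarrow> bool) \<Rightarrow> ('a \<Rightarrow> bool) \<Rightarrow> ('a \<Rightarrow> bool) \<Rightarrow> 'a set \<Rightarrow> bool" where
  "close V E c c' A \<longleftrightarrow>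
     (let D = {v \<in> V. c v \<noteq> c' v} in finite D \<and> (\<forall>v\<in>D. fin_deg V E v) \<and> D \<subseteq> A)"

definition almost_strongly_maximal :: "'a set \<Rightarrow> ('a \<Rightarrow> 'a \<Rightarrow> bool) \<Rightarrow> ('a \<Rightarrow> bool) \<Rightarrow> 'a set \<Rightarrow> bool" where
  "almost_strongly_maximal V E c A \<longleftrightarrow>
     (\<exists>c'. close V E c c' A \<and> strongly_maximal V E c' A)"

end

theory Submission
  imports Defs
begin

definition inc :: "('a \<Rightarrow> 'a \<Rightarrow> bool) \<Rightarrow> 'a set \<Rightarrow> 'a set set" where
  "inc E F = {{u, v} | u v. E u v \<and> (u \<in> F \<or> v \<in> F)}"

lemma inc_mono: "F \<subseteq> G \<Longrightarrow> inc E F \<subseteq> inc E G"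
  unfolding inc_def by blast

lemma trans_diff1: "trans_edges V E c - trans_edges V E (flip c F) \<subseteq> inc E F"
  unfolding trans_edges_def inc_def flip_def by auto

lemma trans_diff2: "trans_edges V E (flip c F) - trans_edges V E c \<subseteq> inc E F"
  unfolding trans_edges_def inc_def flip_def by auto

lemma inc_finite:
  assumes g: "graph V E" and f: "finite F" and d: "\<forall>v\<in>F. fin_deg V E v"
  shows "finite (inc E F)"
proof -
  have "inc E F \<subseteq> (\<Union>u\<in>F. (\<lambda>v. {u, v}) ` nbrs V E u)"
  proof
    fix x assume "x \<in> inc E F"
    then obtain u v where x: "x = {u,v}" "E u v" "u \<in> F \<or> v \<in> F" unfolding inc_def by blast
    from g x(2) have "u \<in> V" "v \<in> V" "E v u" unfolding graph_def by auto
    with x show "x \<in> (\<Union>u\<in>F. (\<lambda>v. {u, v}) ` nbrs V E u)"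
      unfolding nbrs_def by (auto simp: insert_commute)
  qed
  moreover have "finite (\<Union>u\<in>F. (\<lambda>v. {u, v}) ` nbrs V E u)"
    using f d unfolding fin_deg_def by auto
  ultimately show ?thesis by (rule finite_subset)
qed

lemma card_diff_D:
  assumes "finite D" "X - Y \<subseteq> D" "Y - X \<subseteq> D"
  shows "int (card (X - Y)) - int (card (Y - X)) = int (card (X \<inter> D)) - int (card (Y \<inter> D))"
proof -
  have e1: "X \<inter> D = (X - Y) \<union> (X \<inter> Y \<inter> D)" using assms by blast
  have e2: "Y \<inter> D = (Y - X) \<union> (X \<inter> Y \<inter> D)" using assms by blast
  have f: "finite (X - Y)" "finite (Y - X)" "finite (X \<inter> Y \<inter> D)"
    using assms finite_subset by auto
  have "card (X \<inter> D) = card (X - Y) + card (X \<inter> Y \<inter> D)"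
    unfolding e1 using f by (subst card_Un_disjoint) auto
  moreover have "card (Y \<inter> D) = card (Y - X) + card (X \<inter> Y \<inter> D)"
    unfolding e2 using f by (subst card_Un_disjoint) auto
  ultimately show ?thesis by simp
qed

lemma dtrans_D:
  assumes "finite D" "inc E F \<subseteq> D"
  shows "dtrans V E c F = int (card (trans_edges V E c \<inter> D)) - int (card (trans_edges V E (flip c F) \<inter> D))"
  unfolding dtrans_def
  apply (rule card_diff_D)
  using assms trans_diff1[of V E c F] trans_diff2[of V E c F] by auto

lemma flip_flip: "flip (flip c G) H = flip c ((G - H) \<union> (H - G))"
  unfolding flip_def by auto

lemma cocycle:
  assumes g: "graph V E" and "finite G" "\<forall>v\<in>G. fin_deg V E v" "finite H" "\<forall>v\<in>H. fin_deg V E v"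
  shows "dtrans V E c G + dtrans V E (flip c G) H = dtrans V E c ((G - H) \<union> (H - G))"
proof -
  define D where "D = inc E G \<union> inc E H"
  have fD: "finite D" unfolding D_def using inc_finite assms by blast
  have s: "inc E ((G - H) \<union> (H - G)) \<subseteq> D" unfolding D_def using inc_mono[of "(G - H) \<union> (H - G)" "G \<union> H" E]
    unfolding inc_def by blast
  show ?thesis
    using dtrans_D[OF fD, of E G V c] dtrans_D[OF fD, of E H V "flip c G"] dtrans_D[OF fD s, of V c]
    unfolding D_def flip_flip by auto
qed

lemma dtrans_lb:
  assumes "graph V E" "finite B" "\<forall>v\<in>B. fin_deg V E v" "H \<subseteq> B"
  shows "dtrans V E c H \<ge> - int (card (inc E B))"
proof -
  have "card (trans_edges V E (flip c H) - trans_edges V E c) \<le> card (inc E B)"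
    apply (rule card_mono)
    using inc_finite[OF assms(1-3)] apply simp
    using trans_diff2 inc_mono[OF assms(4)] by blast
  then show ?thesis unfolding dtrans_def by simp
qed

theorem corollary2p4:
  fixes V :: "'a set" and E :: "'a \<Rightarrow> 'a \<Rightarrow> bool" and c :: "'a \<Rightarrow> bool" and A A' :: "'a set"
  assumes "graph V E"
    and "A' \<subseteq> A" and "A \<subseteq> V"
    and "strongly_maximal V E c A'"
    and "finite {v \<in> A - A'. fin_deg V E v}"
  shows "almost_strongly_maximal V E c A"
proof -
  note g = assms(1)
  define B where "B = {v \<in> A - A'. fin_deg V E v}"
  define K where "K = int (card (inc E B))"
  define Adm where "Adm = {F. finite F \<and> F \<subseteq> A \<and> (\<forall>v\<in>F. fin_deg V E v)}"
  have fB: "finite B" and dB: "\<forall>v\<in>B. fin_deg V E v" using assms(5) unfolding B_def by auto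
  have lb: "dtrans V E c F \<ge> - K" if "F \<in> Adm" for F
  proof -
    define F1 where "F1 = F \<inter> A'"
    define F2 where "F2 = F - A'"
    have F: "finite F" "F \<subseteq> A" "\<forall>v\<in>F. fin_deg V E v" using that unfolding Adm_def by auto
    have "F2 \<subseteq> B" unfolding F2_def B_def using F by auto
    have e: "(F1 - F2) \<union> (F2 - F1) = F" unfolding F1_def F2_def by blast
    have c: "dtrans V E c F1 + dtrans V E (flip c F1) F2 = dtrans V E c F"
      using cocycle[OF g, of F1 F2 c] F unfolding e unfolding F1_def F2_def by auto
    have "dtrans V E c F1 \<ge> 0" using assms(4) F unfolding strongly_maximal_def F1_def by auto
    moreover have "dtrans V E (flip c F1) F2 \<ge> - K"
      unfolding K_def by (rule dtrans_lb[OF g fB dB \<open>F2 \<subseteq> B\<close>])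
    ultimately show ?thesis using c by linarith
  qed
  have "{} \<in> Adm" unfolding Adm_def by auto
  then obtain F0 where F0: "F0 \<in> Adm" and mn: "\<forall>F. F \<in> Adm \<longrightarrow> nat (dtrans V E c F0 + K) \<le> nat (dtrans V E c F + K)"
    using ex_has_least_nat[of "\<lambda>F. F \<in> Adm" "{}" "\<lambda>F. nat (dtrans V E c F + K)"] by blast
  have mn': "dtrans V E c F0 \<le> dtrans V E c F" if "F \<in> Adm" for F
    using mn that lb[OF that] lb[OF F0] by fastforce
  have F0p: "finite F0" "F0 \<subseteq> A" "\<forall>v\<in>F0. fin_deg V E v" using F0 unfolding Adm_def by auto
  have cl: "close V E c (flip c F0) A"
  proof -
    have "{v \<in> V. c v \<noteq> flip c F0 v} \<subseteq> F0" unfolding flip_def by auto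
    then show ?thesis unfolding close_def Let_def using F0p finite_subset by blast
  qed
  have sm: "strongly_maximal V E (flip c F0) A"
    unfolding strongly_maximal_def
  proof (intro allI impI)
    fix F assume F: "finite F \<and> F \<subseteq> A \<and> (\<forall>v\<in>F. fin_deg V E v)"
    have "(F0 - F) \<union> (F - F0) \<in> Adm" using F F0p unfolding Adm_def by auto
    then have "dtrans V E c F0 \<le> dtrans V E c ((F0 - F) \<union> (F - F0))" by (rule mn')
    moreover have "dtrans V E c F0 + dtrans V E (flip c F0) F = dtrans V E c ((F0 - F) \<union> (F - F0))"
      using cocycle[OF g, of F0 F c] F F0p by auto
    ultimately show "dtrans V E (flip c F0) F \<ge> 0" by linarith
  qed
  show ?thesis unfolding almost_strongly_maximal_def using cl sm by blast
qed

end
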